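(* Let $\alpha_1,c_1>0$ and let $\{\lambda_n\}_{n\in\mathbb{N}^*}$ be a sequence of positive real numbers with $\lambda_n/(c_1n^{-\alpha_1})\to1$ as $n\to\infty$. Then \[ \sup_{N\in\mathbb{N}^*}\left\{2^{-m/N}\left[\prod_{n=1}^N\lambda_n\right]^{1/N}\right\}=c_1\left(\frac{\alpha_1}{\ln 2}\right)^{\alpha_1}m^{-\alpha_1}+o_{m\to\infty}(m^{-\alpha_1}). \]
   Context: $\mathbb{N}^*$ denotes the positive integers, $\ln$ the natural logarithm; $f=o_{m\to\infty}(g)$ means $f(m)/g(m)\to0$. *)

theory Defs
  imports "HOL-Analysis.Analysis" "HOL-Library.Landau_Symbols"
begin

definition sup_geo :: "(nat \<Rightarrow> real) \<Rightarrow> nat \<Rightarrow> real" where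
  "sup_geo lam m = (SUP N\<in>{1..}. 2 powr (- real m / real N) * (\<Prod>n=1..N. lam n) powr (1 / real N))"

end

theory Submission imports Defs "HOL-Real_Asymp.Real_Asymp" begin

lemma cesaro0:
  fixes x :: "nat \<Rightarrow> real"
  assumes "x \<longlonglongrightarrow> 0"
  shows "(\<lambda>N. (\<Sum>n=1..N. x n) / real N) \<longlonglongrightarrow> 0"
proof (rule LIMSEQ_I)
  fix r :: real assume r: "r > 0"
  from LIMSEQ_D[OF assms, of "r/2"] r obtain N0 where N0: "\<And>n. n \<ge> N0 \<Longrightarrow> \<bar>x n\<bar> < r/2"
    by auto
  define B where "B = (\<Sum>n<N0. \<bar>x n\<bar>)"
  have B0: "B \<ge> 0" unfolding B_def by (simp add: sum_nonneg)
  define N1 where "N1 = nat \<lceil>2*B/r\<rceil> + 1"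
  have N1: "real N1 > 2*B/r" unfolding N1_def by linarith
  show "\<exists>no. \<forall>N\<ge>no. norm ((\<Sum>n=1..N. x n) / real N - 0) < r"
  proof (intro exI allI impI)
    fix N assume N: "N \<ge> N1"
    have Npos: "real N > 0" using N unfolding N1_def by simp
    have "\<bar>\<Sum>n=1..N. x n\<bar> \<le> (\<Sum>n=1..N. \<bar>x n\<bar>)" by (rule sum_abs)
    also have "\<dots> \<le> (\<Sum>n=1..N. (if n \<in> {..<N0} then \<bar>x n\<bar> else 0) + r/2)"
    proof (rule sum_mono)
      fix n assume "n \<in> {1..N}"
      show "\<bar>x n\<bar> \<le> (if n \<in> {..<N0} then \<bar>x n\<bar> else 0) + r/2"
        using N0[of n] r by (cases "n < N0") auto
    qed
    also have "\<dots> = (\<Sum>n\<in>{1..N} \<inter> {..<N0}. \<bar>x n\<bar>) + real N * (r/2)"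
      by (simp add: sum.distrib sum.inter_restrict)
    also have "(\<Sum>n\<in>{1..N} \<inter> {..<N0}. \<bar>x n\<bar>) \<le> B"
      unfolding B_def by (rule sum_mono2) auto
    finally have "\<bar>\<Sum>n=1..N. x n\<bar> \<le> B + real N * (r/2)" by simp
    moreover have "B < real N * (r/2)"
    proof -
      have "2*B/r < real N" using N1 N by linarith
      then show ?thesis using r by (simp add: field_simps)
    qed
    ultimately have "\<bar>\<Sum>n=1..N. x n\<bar> < real N * r" by linarith
    then show "norm ((\<Sum>n=1..N. x n) / real N - 0) < r"
      using Npos by (simp add: field_simps)
  qed
qed

lemma ln_step_bounds:
  assumes "N \<ge> (1::nat)"
  shows "ln (real N + 1) - ln (real N) \<le> 1 / real N"
    and "1 / (real N + 1) \<le> ln (real N + 1) - ln (real N)"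
proof -
  have p: "real N > 0" using assms by simp
  have "ln ((real N + 1) / real N) \<le> (real N + 1) / real N - 1"
    by (rule ln_le_minus_one) (use p in simp)
  then show "ln (real N + 1) - ln (real N) \<le> 1 / real N"
    using p by (simp add: ln_div field_simps)
  have "ln (real N / (real N + 1)) \<le> real N / (real N + 1) - 1"
    by (rule ln_le_minus_one) (use p in simp)
  then show "1 / (real N + 1) \<le> ln (real N + 1) - ln (real N)"
    using p by (simp add: ln_div field_simps)
qed

lemma lnfact_bounds:
  assumes "N \<ge> (1::nat)"
  shows "real N * ln (real N) - real N + 1 \<le> (\<Sum>n=1..N. ln (real n))
       \<and> (\<Sum>n=1..N. ln (real n)) \<le> (real N + 1) * ln (real N) - real N + 1"
  using assms
proof (induction N rule: dec_induct)
  case base then show ?case by simp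
next
  case (step N)
  have s: "(\<Sum>n=1..Suc N. ln (real n)) = (\<Sum>n=1..N. ln (real n)) + ln (real N + 1)"
    by (simp add: add.commute)
  note b = ln_step_bounds[OF step(1)]
  have p: "real N \<ge> 1" using step(1) by simp
  have e1: "real N * (ln (real N + 1) - ln (real N)) \<le> 1"
    using mult_left_mono[OF b(1), of "real N"] p by simp
  have e2: "1 \<le> (real N + 1) * (ln (real N + 1) - ln (real N))"
    using mult_left_mono[OF b(2), of "real N + 1"] p by simp
  show ?case unfolding s using step(3) e1 e2
    by (simp add: algebra_simps)
qed

lemma lnfact_lim:
  "(\<lambda>N. ln (real N) - (\<Sum>n=1..N. ln (real n)) / real N - 1) \<longlonglongrightarrow> 0"
proof (rule tendsto_sandwich[of "\<lambda>N. - ((ln (real N) + 1) / real N)" _ _ "\<lambda>N. 0"])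
  show "\<forall>\<^sub>F N in sequentially. - ((ln (real N) + 1) / real N)
      \<le> ln (real N) - (\<Sum>n=1..N. ln (real n)) / real N - 1"
    "\<forall>\<^sub>F N in sequentially. ln (real N) - (\<Sum>n=1..N. ln (real n)) / real N - 1 \<le> 0"
  proof -
    { fix N :: nat assume N: "N \<ge> 1"
      have p: "real N > 0" using N by simp
      note lb = lnfact_bounds[OF N]
      have "(real N * ln (real N) - real N + 1) / real N \<le> (\<Sum>n=1..N. ln (real n)) / real N"
        using lb p by (intro divide_right_mono) auto
      moreover have "(real N * ln (real N) - real N + 1) / real N = ln (real N) - 1 + 1 / real N"
        using p by (simp add: field_simps)
      moreover have "(\<Sum>n=1..N. ln (real n)) / real N \<le> ((real N + 1) * ln (real N) - real N + 1) / real N"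
        using lb p by (intro divide_right_mono) auto
      moreover have "((real N + 1) * ln (real N) - real N + 1) / real N = ln (real N) + (ln (real N) + 1) / real N - 1"
        using p by (simp add: field_simps)
      moreover have "1 / real N > 0" using p by simp
      ultimately have "- ((ln (real N) + 1) / real N) \<le> ln (real N) - (\<Sum>n=1..N. ln (real n)) / real N - 1
         \<and> ln (real N) - (\<Sum>n=1..N. ln (real n)) / real N - 1 \<le> 0" by linarith }
    then show "\<forall>\<^sub>F N in sequentially. - ((ln (real N) + 1) / real N)
      \<le> ln (real N) - (\<Sum>n=1..N. ln (real n)) / real N - 1"
    "\<forall>\<^sub>F N in sequentially. ln (real N) - (\<Sum>n=1..N. ln (real n)) / real N - 1 \<le> 0"
      unfolding eventually_sequentially by blast+
  qed
  show "(\<lambda>N. - ((ln (real N) + 1) / real N)) \<longlonglongrightarrow> 0" by real_asymp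
qed simp


lemma nat_ceil_tendsto:
  fixes xs :: real assumes xs: "xs > 0"
  shows "filterlim (\<lambda>m::nat. nat \<lceil>real m * xs\<rceil>) at_top sequentially"
    and "(\<lambda>m::nat. real (nat \<lceil>real m * xs\<rceil>) / real m) \<longlonglongrightarrow> xs"
proof -
  show "filterlim (\<lambda>m::nat. nat \<lceil>real m * xs\<rceil>) at_top sequentially"
    unfolding filterlim_at_top eventually_sequentially
  proof (intro allI exI allI impI)
    fix Z :: nat and m :: nat assume m: "m \<ge> nat \<lceil>real Z / xs\<rceil>"
    have "real m \<ge> real Z / xs" using m by linarith
    then have "real m * xs \<ge> real Z" using xs by (simp add: field_simps)
    then show "Z \<le> nat \<lceil>real m * xs\<rceil>" by linarith
  qed
  show "(\<lambda>m::nat. real (nat \<lceil>real m * xs\<rceil>) / real m) \<longlonglongrightarrow> xs"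
  proof (rule tendsto_sandwich[of "\<lambda>m. xs" _ _ "\<lambda>m. xs + 1 / real m"])
    show "\<forall>\<^sub>F m in sequentially. xs \<le> real (nat \<lceil>real m * xs\<rceil>) / real m"
      unfolding eventually_sequentially
    proof (intro exI allI impI)
      fix m :: nat assume "m \<ge> 1"
      then have p: "real m > 0" by simp
      have "real m * xs \<le> real (nat \<lceil>real m * xs\<rceil>)" by linarith
      then show "xs \<le> real (nat \<lceil>real m * xs\<rceil>) / real m" using p by (simp add: field_simps)
    qed
    show "\<forall>\<^sub>F m in sequentially. real (nat \<lceil>real m * xs\<rceil>) / real m \<le> xs + 1 / real m"
      unfolding eventually_sequentially
    proof (intro exI allI impI)
      fix m :: nat assume "m \<ge> 1"
      then have p: "real m > 0" by simp
      have nn: "0 \<le> real m * xs" using xs p by simp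
      then have "real (nat \<lceil>real m * xs\<rceil>) = real_of_int \<lceil>real m * xs\<rceil>" by simp
      then have "real (nat \<lceil>real m * xs\<rceil>) \<le> real m * xs + 1" by linarith
      then show "real (nat \<lceil>real m * xs\<rceil>) / real m \<le> xs + 1 / real m" using p by (simp add: field_simps)
    qed
    show "(\<lambda>m. xs + 1 / real m) \<longlonglongrightarrow> xs" by real_asymp
  qed simp
qed

lemma H_le:
  fixes a x :: real assumes a: "a > 0" and x: "x > 0"
  shows "2 powr (-1/x) * x powr (-a) \<le> exp (a * ln (a / ln 2) - a)"
proof -
  have l2: "ln 2 > (0::real)" by simp
  have "2 powr (-1/x) * x powr (-a) = exp (- ln 2 / x - a * ln x)"
    using x by (simp add: powr_def exp_add[symmetric] exp_diff)
  also have "\<dots> \<le> exp (a * ln (a / ln 2) - a)"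
  proof (subst exp_le_cancel_iff)
    define u where "u = ln 2 / (a * x)"
    have u: "u > 0" using a x l2 unfolding u_def by simp
    have "ln u \<le> u - 1" by (rule ln_le_minus_one) (use u in simp)
    then have "a * ln u \<le> a * u - a" using a
      by (metis mult_left_mono less_imp_le right_diff_distrib mult.right_neutral)
    moreover have "a * ln u = a * ln (ln 2) - a * ln a - a * ln x"
      using a x l2 unfolding u_def by (simp add: ln_div ln_mult algebra_simps)
    moreover have "a * u = ln 2 / x" using a unfolding u_def by simp
    moreover have "a * ln (a / ln 2) = a * ln a - a * ln (ln 2)" using a l2 by (simp add: ln_div algebra_simps)
    ultimately show "- ln 2 / x - a * ln x \<le> a * ln (a / ln 2) - a"
      by linarith
  qed
  finally show ?thesis .
qed

lemma H_at:
  fixes a :: real assumes a: "a > 0"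
  shows "2 powr (-1/(ln 2 / a)) * (ln 2 / a) powr (-a) = exp (a * ln (a / ln 2) - a)"
proof -
  have l2: "ln 2 > (0::real)" by simp
  have "2 powr (-1/(ln 2 / a)) * (ln 2 / a) powr (-a) = exp (- a - a * ln (ln 2 / a))"
    using a l2 by (simp add: powr_def exp_add[symmetric] exp_diff)
  also have "ln (ln 2 / a) = - ln (a / ln 2)" using a l2 by (simp add: ln_div)
  finally show ?thesis by (simp add: algebra_simps)
qed


theorem lemma4:
  fixes \<alpha>1 c1 :: real and lam :: "nat \<Rightarrow> real"
  assumes "\<alpha>1 > 0" and "c1 > 0"
    and "\<And>n. n \<ge> 1 \<Longrightarrow> lam n > 0"
    and "(\<lambda>n. lam n / (c1 * real n powr (- \<alpha>1))) \<longlonglongrightarrow> 1"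
  shows "(\<lambda>m. sup_geo lam m - c1 * (\<alpha>1 / ln 2) powr \<alpha>1 * real m powr (- \<alpha>1))
           \<in> o(\<lambda>m. real m powr (- \<alpha>1))"
proof -
  define a where "a = \<alpha>1"
  define c where "c = c1"
  have a: "a > 0" and c: "c > 0" using assms(1,2) unfolding a_def c_def by auto
  have l2: "ln 2 > (0::real)" by simp
  define r where "r n = lam n / (c * real n powr (-a))" for n
  have r_lim: "r \<longlonglongrightarrow> 1" using assms(4) unfolding r_def a_def c_def by simp
  have rpos: "r n > 0" if "n \<ge> 1" for n
    using assms(3)[OF that] c that unfolding r_def by simp
  have lnr: "(\<lambda>n. ln (r n)) \<longlonglongrightarrow> 0"
    using tendsto_ln[OF r_lim] by simp
  define D where "D N = (\<Sum>n=1..N. ln (r n)) / real N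
      + a * (ln (real N) - (\<Sum>n=1..N. ln (real n)) / real N - 1)" for N
  have D_lim: "D \<longlonglongrightarrow> 0"
    unfolding D_def using tendsto_add[OF cesaro0[OF lnr] tendsto_mult_right_zero[OF lnfact_lim, of a]]
    by simp
  define K where "K = c * exp a"
  have K: "K > 0" unfolding K_def using c by simp
  define \<rho> where "\<rho> N = exp (D N)" for N
  have \<rho>_lim: "\<rho> \<longlonglongrightarrow> 1" unfolding \<rho>_def using tendsto_exp[OF D_lim] by simp
  have \<rho>pos: "\<rho> N > 0" for N unfolding \<rho>_def by simp
  define G where "G N = (\<Prod>n=1..N. lam n) powr (1 / real N)" for N
  have G_nonneg: "G N \<ge> 0" for N unfolding G_def by simp
  have key1: "G N = K * real N powr (-a) * \<rho> N" if N: "N \<ge> 1" for N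
  proof -
    have Np: "real N > 0" using N by simp
    have pp: "(\<Prod>n=1..N. lam n) > 0" by (rule prod_pos) (use assms(3) in auto)
    have lnl: "ln (lam n) = ln c - a * ln (real n) + ln (r n)" if "n \<in> {1..N}" for n
    proof -
      have n: "n \<ge> 1" using that by simp
      have "lam n = c * real n powr (-a) * r n" unfolding r_def using c n by simp
      then have "ln (lam n) = ln (c * real n powr (-a) * r n)" by simp
      also have "\<dots> = ln c + ln (real n powr (-a)) + ln (r n)"
        using c n rpos[OF n] by (simp add: ln_mult)
      also have "ln (real n powr (-a)) = - a * ln (real n)" using n by (simp add: ln_powr)
      finally show ?thesis by simp
    qed
    have "ln (\<Prod>n=1..N. lam n) = (\<Sum>n=1..N. ln (lam n))"
    proof (rule ln_prod)
      fix n assume "n \<in> {1..N}"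
      then have "lam n > 0" using assms(3) by simp
      then show "lam n \<noteq> 0" by simp
    qed simp
    also have "\<dots> = (\<Sum>n=1..N. ln c - a * ln (real n) + ln (r n))"
      using lnl by (rule sum.cong[OF refl])
    also have "\<dots> = real N * ln c - a * (\<Sum>n=1..N. ln (real n)) + (\<Sum>n=1..N. ln (r n))"
      by (simp add: sum.distrib sum_subtractf sum_distrib_left)
    finally have e: "ln (\<Prod>n=1..N. lam n) / real N = ln c + a - a * ln (real N) + D N"
      unfolding D_def using Np by (simp add: field_simps)
    have "G N = exp (ln (\<Prod>n=1..N. lam n) / real N)"
    proof -
      have nz: "\<forall>a\<in>{Suc 0..N}. lam a \<noteq> 0"
      proof
        fix a :: nat assume "a \<in> {Suc 0..N}"
        then have "a \<ge> 1" by simp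
        then show "lam a \<noteq> 0" using assms(3)[of a] by simp
      qed
      show ?thesis unfolding G_def using pp nz by (simp add: powr_def)
    qed
    also have "\<dots> = exp (ln c + a + (- a * ln (real N)) + D N)"
      unfolding e by (intro arg_cong[where f=exp]) (simp add: algebra_simps)
    also have "\<dots> = exp (ln c) * exp a * exp (- a * ln (real N)) * exp (D N)"
      by (simp only: exp_add)
    also have "\<dots> = K * real N powr (-a) * \<rho> N"
      unfolding K_def \<rho>_def using c Np by (simp add: powr_def)
    finally show ?thesis .
  qed
  define H where "H x = 2 powr (-1/x) * x powr (-a)" for x :: real
  define Hs where "Hs = exp (a * ln (a / ln 2) - a)"
  have Hle: "H x \<le> Hs" if "x > 0" for x unfolding H_def Hs_def using H_le[OF a that] .
  define xs where "xs = ln 2 / a"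
  have xs: "xs > 0" unfolding xs_def using a by simp
  have Hxs: "H xs = Hs" unfolding H_def Hs_def xs_def using H_at[OF a] .
  have CK: "c1 * (\<alpha>1 / ln 2) powr \<alpha>1 = K * Hs"
    unfolding K_def Hs_def a_def[symmetric] c_def[symmetric] using a l2
    by (simp add: powr_def exp_diff)
  define f where "f m N = 2 powr (- real m / real N) * (\<Prod>n=1..N. lam n) powr (1 / real N)" for m N :: nat
  have fG: "f m N = 2 powr (- real m / real N) * G N" for m N unfolding f_def G_def by simp
  have key2: "real m powr a * f m N = K * \<rho> N * H (real N / real m)" if "m \<ge> 1" "N \<ge> 1" for m N
  proof -
    have mp: "real m > 0" and Np: "real N > 0" using that by auto
    have "real m powr a * f m N = K * \<rho> N * (2 powr (- real m / real N) * (real N powr (-a) * real m powr a))"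
      unfolding fG key1[OF that(2)] by (simp add: algebra_simps)
    also have "real N powr (-a) * real m powr a = (real N / real m) powr (-a)"
      using mp Np by (simp add: powr_divide powr_minus field_simps)
    also have "- real m / real N = -1 / (real N / real m)" using mp Np by simp
    finally show ?thesis unfolding H_def .
  qed
  have sup_eq: "sup_geo lam m = (SUP N\<in>{1..}. f m N)" for m
    unfolding sup_geo_def f_def ..
  have upper: "\<exists>N0\<ge>1. \<exists>M. \<forall>m\<ge>1. \<forall>N\<ge>1. f m N \<le> max (real m powr (-a) * (K * Hs * (1 + \<epsilon>))) (2 powr (- real m / real N0) * M)"
    if eps: "\<epsilon> > 0" for \<epsilon>
  proof -
    have "\<forall>\<^sub>F N in sequentially. \<rho> N < 1 + \<epsilon>"
      using order_tendstoD(2)[OF \<rho>_lim] eps by simp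
    then obtain N1 where N1: "\<And>N. N \<ge> N1 \<Longrightarrow> \<rho> N < 1 + \<epsilon>" unfolding eventually_sequentially by blast
    define N0 where "N0 = max N1 1"
    define M where "M = (\<Sum>N=1..N0. G N)"
    have "\<forall>m\<ge>1. \<forall>N\<ge>1. f m N \<le> max (real m powr (-a) * (K * Hs * (1 + \<epsilon>))) (2 powr (- real m / real N0) * M)"
    proof (intro allI impI)
      fix m N :: nat assume m: "m \<ge> 1" and N: "N \<ge> 1"
      have mp: "real m > 0" and Np: "real N > 0" using m N by auto
      show "f m N \<le> max (real m powr (-a) * (K * Hs * (1 + \<epsilon>))) (2 powr (- real m / real N0) * M)"
      proof (cases "N \<ge> N0")
        case True
        then have "\<rho> N \<le> 1 + \<epsilon>" using N1[of N] unfolding N0_def by simp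
        moreover have "H (real N / real m) \<le> Hs" using Hle mp Np by simp
        moreover have "H (real N / real m) \<ge> 0" unfolding H_def by simp
        ultimately have "K * \<rho> N * H (real N / real m) \<le> K * (1 + \<epsilon>) * Hs"
          using K \<rho>pos[of N] eps by (intro mult_mono) auto
        then have "real m powr a * f m N \<le> K * Hs * (1 + \<epsilon>)"
          using key2[OF m N] by (simp add: algebra_simps)
        then have "real m powr (-a) * (real m powr a * f m N) \<le> real m powr (-a) * (K * Hs * (1 + \<epsilon>))"
          by (intro mult_left_mono) auto
        moreover have "real m powr (-a) * (real m powr a * f m N) = f m N"
          using mp by (simp add: powr_minus field_simps)
        ultimately show ?thesis by simp
      next
        case False
        have "G N \<le> M" unfolding M_def
          by (rule member_le_sum) (use False N G_nonneg in auto)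
        moreover have "2 powr (- real m / real N) \<le> 2 powr (- real m / real N0)"
        proof (rule powr_mono)
          have "real m / real N0 \<le> real m / real N"
            using False Np mp by (intro divide_left_mono) auto
          then show "- real m / real N \<le> - real m / real N0" by simp
        qed simp
        ultimately have "f m N \<le> 2 powr (- real m / real N0) * M"
          unfolding fG using G_nonneg[of N] by (intro mult_mono) auto
        then show ?thesis by simp
      qed
    qed
    moreover have "N0 \<ge> 1" unfolding N0_def by simp
    ultimately show ?thesis by blast
  qed
  have bdd: "bdd_above (f m ` {1..})" if m: "m \<ge> 1" for m
  proof -
    obtain N0 M where "\<forall>m\<ge>1. \<forall>N\<ge>1. f m N \<le> max (real m powr (-a) * (K * Hs * (1 + 1))) (2 powr (- real m / real N0) * M)"
      using upper[of 1] by auto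
    then show ?thesis using m by (intro bdd_aboveI2[where M="max (real m powr (-a) * (K * Hs * (1 + 1))) (2 powr (- real m / real N0) * M)"]) auto
  qed
  have main: "(\<lambda>m. real m powr a * sup_geo lam m) \<longlonglongrightarrow> K * Hs"
  proof (rule order_tendstoI)
    fix y assume y: "y > K * Hs"
    have KH: "K * Hs > 0" using K unfolding Hs_def by simp
    define \<epsilon> where "\<epsilon> = (y - K * Hs) / (2 * (K * Hs))"
    have eps: "\<epsilon> > 0" unfolding \<epsilon>_def using y KH by simp
    have eqn: "K * Hs * (1 + \<epsilon>) = K * Hs + (y - K * Hs) / 2"
      unfolding \<epsilon>_def using K by (simp add: Hs_def field_simps)
    have ylt: "K * Hs * (1 + \<epsilon>) < y" unfolding eqn using y by (simp add: field_simps)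
    obtain N0 M where N0: "N0 \<ge> 1" and bnd: "\<And>m N. m \<ge> 1 \<Longrightarrow> N \<ge> 1 \<Longrightarrow> f m N \<le> max (real m powr (-a) * (K * Hs * (1 + \<epsilon>))) (2 powr (- real m / real N0) * M)"
      using upper[OF eps] by blast
    have N0p: "real N0 > 0" using N0 by simp
    have "(\<lambda>m::nat. real m powr a * 2 powr (- real m / real N0) * M) \<longlonglongrightarrow> 0"
      using N0p by real_asymp
    then have ev: "\<forall>\<^sub>F m in sequentially. real m powr a * 2 powr (- real m / real N0) * M < y"
      using order_tendstoD(2) y KH by force
    show "\<forall>\<^sub>F m in sequentially. real m powr a * sup_geo lam m < y"
      using ev eventually_ge_at_top[of 1]
    proof eventually_elim
      case (elim m)
      have mp: "real m > 0" using elim by simp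
      have "sup_geo lam m \<le> max (real m powr (-a) * (K * Hs * (1 + \<epsilon>))) (2 powr (- real m / real N0) * M)"
        unfolding sup_eq by (rule cSUP_least) (use bnd elim in auto)
      then have "real m powr a * sup_geo lam m \<le> real m powr a * max (real m powr (-a) * (K * Hs * (1 + \<epsilon>))) (2 powr (- real m / real N0) * M)"
        by (intro mult_left_mono) auto
      also have "\<dots> = max (real m powr a * (real m powr (-a) * (K * Hs * (1 + \<epsilon>)))) (real m powr a * (2 powr (- real m / real N0) * M))"
        by (simp only: max_mult_distrib_left) simp
      also have "\<dots> = max (K * Hs * (1 + \<epsilon>)) (real m powr a * 2 powr (- real m / real N0) * M)"
      proof -
        have h: "real m powr a * (real m powr (-a) * (K * Hs * (1 + \<epsilon>))) = K * Hs * (1 + \<epsilon>)"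
          using mp by (simp add: powr_minus)
        show ?thesis unfolding h by (simp only: mult.assoc)
      qed
      also have "\<dots> < y" using ylt elim by simp
      finally show ?case .
    qed
  next
    fix y assume y: "y < K * Hs"
    define Nm where "Nm m = nat \<lceil>real m * xs\<rceil>" for m :: nat
    have Nm_top: "filterlim Nm at_top sequentially" unfolding Nm_def by (rule nat_ceil_tendsto(1)[OF xs])
    have Nm_ratio: "(\<lambda>m. real (Nm m) / real m) \<longlonglongrightarrow> xs" unfolding Nm_def by (rule nat_ceil_tendsto(2)[OF xs])
    have "isCont H xs" unfolding H_def using xs by (intro continuous_intros) auto
    then have Hlim: "(\<lambda>m. H (real (Nm m) / real m)) \<longlonglongrightarrow> Hs"
      using isCont_tendsto_compose[OF _ Nm_ratio] Hxs by metis
    have rlim: "(\<lambda>m. \<rho> (Nm m)) \<longlonglongrightarrow> 1" using filterlim_compose[OF \<rho>_lim Nm_top] by (simp add: o_def)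
    have "(\<lambda>m. K * \<rho> (Nm m) * H (real (Nm m) / real m)) \<longlonglongrightarrow> K * 1 * Hs"
      by (intro tendsto_intros rlim Hlim)
    then have ev: "\<forall>\<^sub>F m in sequentially. y < K * \<rho> (Nm m) * H (real (Nm m) / real m)"
      using order_tendstoD(1) y by force
    show "\<forall>\<^sub>F m in sequentially. y < real m powr a * sup_geo lam m"
      using ev eventually_ge_at_top[of 1]
    proof eventually_elim
      case (elim m)
      have mp: "real m > 0" using elim by simp
      have Nm1: "Nm m \<ge> 1"
      proof -
        have "real m * xs > 0" using mp xs by simp
        then show ?thesis unfolding Nm_def by linarith
      qed
      have "f m (Nm m) \<le> sup_geo lam m"
        unfolding sup_eq by (rule cSUP_upper) (use Nm1 bdd elim in auto)
      then have "real m powr a * f m (Nm m) \<le> real m powr a * sup_geo lam m"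
        by (intro mult_left_mono) auto
      then show ?case using key2[OF elim(2) Nm1] elim(1) by simp
    qed
  qed
  show ?thesis
  proof (rule smalloI_tendsto)
    have "(\<lambda>m. real m powr a * sup_geo lam m - K * Hs) \<longlonglongrightarrow> K * Hs - K * Hs"
      by (intro tendsto_intros main)
    then have L: "(\<lambda>m. real m powr a * sup_geo lam m - K * Hs) \<longlonglongrightarrow> 0" by simp
    show "((\<lambda>m. (sup_geo lam m - c1 * (\<alpha>1 / ln 2) powr \<alpha>1 * real m powr - \<alpha>1) / real m powr - \<alpha>1) \<longlongrightarrow> 0) sequentially"
    proof (rule Lim_transform_eventually[OF L])
      show "\<forall>\<^sub>F m in sequentially. real m powr a * sup_geo lam m - K * Hs =
          (sup_geo lam m - c1 * (\<alpha>1 / ln 2) powr \<alpha>1 * real m powr - \<alpha>1) / real m powr - \<alpha>1"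
        using eventually_ge_at_top[of 1]
      proof eventually_elim
        case (elim m)
        then have mp: "real m > 0" by simp
        show ?case unfolding CK using mp unfolding a_def
          by (simp add: powr_minus field_simps)
      qed
    qed
    show "\<forall>\<^sub>F m in sequentially. real m powr - \<alpha>1 \<noteq> 0"
      using eventually_ge_at_top[of 1] by eventually_elim simp
  qed
qed

end
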